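(* Let $\Omega\subset\mathbb{R}^d$ be a connected, bounded open domain and let $n\ge 1$. Let $\mathbf{r}=(\mathbf{r}_1,\ldots,\mathbf{r}_n)\in\Upsilon$, where $\mathbf{r}_i=(b_i,\boldsymbol{\omega}_i)$ with $b_i\in\mathbb{R}$, $\boldsymbol{\omega}_i\in\mathcal{S}^{d-1}$ and $\mathcal{P}_i(\mathbf{r}_i)\cap\Omega\neq\emptyset$ for each $i$. Assume the hyperplanes $\mathcal{P}_1(\mathbf{r}_1),\ldots,\mathcal{P}_n(\mathbf{r}_n)$ are pairwise distinct. Then the functions $\sigma_0,\sigma_1,\ldots,\sigma_n$ are linearly independent as functions on $\Omega$.
   Context: $\sigma(t)=\max\{0,t\}$ is the ReLU function. $\mathcal{S}^{d-1}$ is the unit sphere in $\mathbb{R}^d$. For $\mathbf{x}\in\mathbb{R}^d$ write $\mathbf{y}=(1,x_1,\ldots,x_d)^T$. For $\mathbf{r}_i=(b_i,\boldsymbol{\omega}_i)\in\mathbb{R}^{d+1}$, the breaking hyperplane is $\mathcal{P}_i(\mathbf{r}_i)=\{\mathbf{x}\in\Omega:\boldsymbol{\omega}_i\cdot\mathbf{x}+b_i=0\}$ (hyperplanes are compared as hyperplanes $\{\mathbf{x}\in\mathbb{R}^d:\boldsymbol{\omega}_i\cdot\mathbf{x}+b_i=0\}$). The admissible set is $\Upsilon=\{\mathbf{r}=(\mathbf{r}_1,\ldots,\mathbf{r}_n): \mathbf{r}_i=(b_i,\boldsymbol{\omega}_i),\ b_i\in\mathbb{R},\ \boldsymbol{\omega}_i\in\mathcal{S}^{d-1},\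 \mathcal{P}_i(\mathbf{r}_i)\cap\Omega\neq\emptyset\}$. Define $\sigma_0(\mathbf{x})=1$ and $\sigma_i(\mathbf{x})=\sigma(\mathbf{r}_i\cdot\mathbf{y})=\sigma(\boldsymbol{\omega}_i\cdot\mathbf{x}+b_i)$ for $i=1,\ldots,n$. *)

theory Defs
  imports "HOL-Analysis.Analysis"
begin

definition relu :: "real \<Rightarrow> real" where
  "relu t = max 0 t"

definition hyperplane_of :: "real \<Rightarrow> 'a::euclidean_space \<Rightarrow> 'a set" where
  "hyperplane_of b w = {x. w \<bullet> x + b = 0}"

definition sigma_fun :: "(nat \<Rightarrow> real) \<Rightarrow> (nat \<Rightarrow> 'a::euclidean_space) \<Rightarrow> nat \<Rightarrow> 'a \<Rightarrow> real" where
  "sigma_fun b w i x = (if i = 0 then 1 else relu (w i \<bullet> x + b i))"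

definition lin_indep_on :: "'a set \<Rightarrow> nat \<Rightarrow> (nat \<Rightarrow> 'a \<Rightarrow> real) \<Rightarrow> bool" where
  "lin_indep_on \<Omega> n f \<longleftrightarrow>
     (\<forall>c :: nat \<Rightarrow> real. (\<forall>x\<in>\<Omega>. (\<Sum>i\<in>{0..n}. c i * f i x) = 0) \<longrightarrow> (\<forall>i\<in>{0..n}. c i = 0))"

end

theory Submission
  imports Defs
begin

lemma relu_mid:
  assumes "\<bar>u\<bar> < \<bar>a\<bar>"
  shows "relu (a + u) + relu (a - u) = 2 * relu a"
  using assms by (auto simp: relu_def abs_if max_def)

lemma proj_norm_le:
  fixes w v :: "'a::euclidean_space"
  assumes "norm w = 1"
  shows "norm (v - (w \<bullet> v) *\<^sub>R w) \<le> norm v"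
proof -
  have ww: "w \<bullet> w = 1" using assms by (simp add: norm_eq_1)
  have "(norm (v - (w \<bullet> v) *\<^sub>R w))\<^sup>2 = (v - (w \<bullet> v) *\<^sub>R w) \<bullet> (v - (w \<bullet> v) *\<^sub>R w)"
    by (rule power2_norm_eq_inner)
  also have "\<dots> = v \<bullet> v - (w \<bullet> v)\<^sup>2"
    by (simp add: inner_diff_left inner_diff_right ww inner_commute power2_eq_square algebra_simps)
  also have "\<dots> = (norm v)\<^sup>2 - (w \<bullet> v)\<^sup>2" by (simp add: power2_norm_eq_inner)
  finally have "(norm (v - (w \<bullet> v) *\<^sub>R w))\<^sup>2 = (norm v)\<^sup>2 - (w \<bullet> v)\<^sup>2" .
  then have "(norm (v - (w \<bullet> v) *\<^sub>R w))\<^sup>2 \<le> (norm v)\<^sup>2" by simp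
  then show ?thesis using power2_le_imp_le by fastforce
qed

lemma exists_point:
  fixes \<Omega> :: "'a::euclidean_space set" and J :: "nat set"
  assumes "open \<Omega>" and ni: "norm (w i) = 1"
    and ne: "hyperplane_of (b i) (w i) \<inter> \<Omega> \<noteq> {}" and "finite J"
    and J: "\<And>j. j \<in> J \<Longrightarrow> norm (w j) = 1 \<and> hyperplane_of (b j) (w j) \<noteq> hyperplane_of (b i) (w i)"
  shows "\<exists>p\<in>\<Omega>. w i \<bullet> p + b i = 0 \<and> (\<forall>j\<in>J. w j \<bullet> p + b j \<noteq> 0)"
proof -
  have ww: "w i \<bullet> w i = 1" using ni by (simp add: norm_eq_1)
  obtain q where q: "q \<in> \<Omega>" "w i \<bullet> q + b i = 0" using ne by (auto simp: hyperplane_of_def)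
  obtain r where r: "r > 0" "ball q r \<subseteq> \<Omega>" using assms(1) q(1) open_contains_ball by blast
  define u where "u j = w j - (w j \<bullet> w i) *\<^sub>R w i" for j
  define B where "B j = {x. u j \<bullet> x = b i * (w j \<bullet> w i) - b j}" for j
  have negB: "negligible (B j)" if "j \<in> J" for j
  proof -
    have "u j \<noteq> 0 \<or> b i * (w j \<bullet> w i) - b j \<noteq> 0"
    proof (rule ccontr)
      assume "\<not> ?thesis"
      then have u0: "u j = 0" and bj: "b j = (w j \<bullet> w i) * b i" by (auto simp: mult.commute)
      define l where "l = w j \<bullet> w i"
      have bj': "b j = l * b i" using bj by (simp add: l_def)
      have wj: "w j = l *\<^sub>R w i" using u0 by (simp add: u_def l_def)
      have "norm (w j) = \<bar>l\<bar>" using wj ni by simp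
      then have l0: "l \<noteq> 0" using J[OF that] by auto
      have "hyperplane_of (b j) (w j) = hyperplane_of (b i) (w i)"
        unfolding hyperplane_of_def bj' wj
        using l0 by (auto simp: distrib_left[symmetric])
      then show False using J[OF that] by blast
    qed
    then show ?thesis unfolding B_def by (rule negligible_hyperplane)
  qed
  have "negligible (\<Union>(B ` J))" using negB \<open>finite J\<close> by auto
  moreover have "\<not> negligible (ball q r)" using r(1) by (intro open_not_negligible) auto
  ultimately have "\<not> ball q r \<subseteq> \<Union>(B ` J)" using negligible_subset by blast
  then obtain x where x: "x \<in> ball q r" "\<forall>j\<in>J. x \<notin> B j" by blast
  define p where "p = x - (w i \<bullet> x + b i) *\<^sub>R w i"
  have p0: "w i \<bullet> p + b i = 0" by (simp add: p_def inner_diff_right ww)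
  have wxq: "w i \<bullet> (x - q) = w i \<bullet> x + b i" using q(2) by (simp add: inner_diff_right)
  have "p - q = (x - q) - (w i \<bullet> (x - q)) *\<^sub>R w i"
    unfolding wxq by (simp add: p_def)
  then have "norm (p - q) \<le> norm (x - q)" using proj_norm_le[OF ni] by metis
  then have "p \<in> ball q r" using x(1) by (simp add: dist_norm norm_minus_commute)
  then have "p \<in> \<Omega>" using r by blast
  moreover have "w j \<bullet> p + b j \<noteq> 0" if "j \<in> J" for j
  proof -
    have "w j \<bullet> p + b j = u j \<bullet> x - (b i * (w j \<bullet> w i) - b j)"
      by (simp add: p_def u_def inner_diff_left inner_diff_right inner_commute algebra_simps)
    then show ?thesis using x(2) that by (auto simp: B_def)
  qed
  ultimately show ?thesis using p0 by blast
qed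

theorem lemma2p1:
  fixes \<Omega> :: "'a::euclidean_space set"
    and n :: nat
    and b :: "nat \<Rightarrow> real"
    and w :: "nat \<Rightarrow> 'a"
  assumes "open \<Omega>" and "connected \<Omega>" and "bounded \<Omega>"
    and "n \<ge> 1"
    and "\<And>i. i \<in> {1..n} \<Longrightarrow> norm (w i) = 1"
    and "\<And>i. i \<in> {1..n} \<Longrightarrow> hyperplane_of (b i) (w i) \<inter> \<Omega> \<noteq> {}"
    and "\<And>i j. i \<in> {1..n} \<Longrightarrow> j \<in> {1..n} \<Longrightarrow> i \<noteq> j \<Longrightarrow>
           hyperplane_of (b i) (w i) \<noteq> hyperplane_of (b j) (w j)"
  shows "lin_indep_on \<Omega> n (sigma_fun b w)"
  unfolding lin_indep_on_def
proof (intro allI impI)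
  fix c :: "nat \<Rightarrow> real"
  assume S0: "\<forall>x\<in>\<Omega>. (\<Sum>k\<in>{0..n}. c k * sigma_fun b w k x) = 0"
  define S where "S x = (\<Sum>k\<in>{0..n}. c k * sigma_fun b w k x)" for x
  have ci: "c i = 0" if i: "i \<in> {1..n}" for i
  proof -
    define J where "J = {1..n} - {i}"
    have ni: "norm (w i) = 1" using assms(5) i by blast
    obtain p where p: "p \<in> \<Omega>" "w i \<bullet> p + b i = 0" "\<forall>j\<in>J. w j \<bullet> p + b j \<noteq> 0"
    proof -
      have "\<exists>p\<in>\<Omega>. w i \<bullet> p + b i = 0 \<and> (\<forall>j\<in>J. w j \<bullet> p + b j \<noteq> 0)"
      proof (rule exists_point[of \<Omega> w i b J])
        show "open \<Omega>" by (rule assms(1))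
        show "norm (w i) = 1" by (rule ni)
        show "hyperplane_of (b i) (w i) \<inter> \<Omega> \<noteq> {}" by (rule assms(6)[OF i])
        show "finite J" by (simp add: J_def)
        fix j assume "j \<in> J"
        then have "j \<in> {1..n}" "j \<noteq> i" by (auto simp: J_def)
        then show "norm (w j) = 1 \<and> hyperplane_of (b j) (w j) \<noteq> hyperplane_of (b i) (w i)"
          using assms(5)[of j] assms(7)[of j i] i by blast
      qed
      then show ?thesis using that by blast
    qed
    obtain \<rho> where \<rho>: "\<rho> > 0" "ball p \<rho> \<subseteq> \<Omega>" using assms(1) p(1) open_contains_ball by blast
    define s where "s = Min (insert (\<rho>/2) ((\<lambda>j. \<bar>w j \<bullet> p + b j\<bar> / 2) ` J))"
    have fin: "finite (insert (\<rho>/2) ((\<lambda>j. \<bar>w j \<bullet> p + b j\<bar> / 2) ` J))" by (simp add: J_def)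
    have spos: "s > 0" unfolding s_def using fin \<rho>(1) p(3) by (subst Min_gr_iff) auto
    have "s \<le> \<rho>/2" unfolding s_def using fin by (intro Min_le) auto
    then have srho: "s < \<rho>" using \<rho>(1) by linarith
    have sj: "s < \<bar>w j \<bullet> p + b j\<bar>" if "j \<in> J" for j
    proof -
      have "s \<le> \<bar>w j \<bullet> p + b j\<bar> / 2" unfolding s_def using fin that by (intro Min_le) auto
      then show ?thesis using p(3) that by auto
    qed
    have inO: "p + t *\<^sub>R w i \<in> \<Omega>" if "\<bar>t\<bar> \<le> s" for t
    proof -
      have "dist p (p + t *\<^sub>R w i) < \<rho>" using that srho ni by (simp add: dist_norm)
      then show ?thesis using \<rho>(2) by auto
    qed
    have D: "c k * sigma_fun b w k (p + s *\<^sub>R w i) + c k * sigma_fun b w k (p + (-s) *\<^sub>R w i)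
             - 2 * (c k * sigma_fun b w k p) = (if k = i then c i * s else 0)"
      if k: "k \<in> {0..n}" for k
    proof (cases "k = 0")
      case True then show ?thesis using i by (simp add: sigma_fun_def)
    next
      case k0: False
      show ?thesis
      proof (cases "k = i")
        case True
        have ww: "w i \<bullet> w i = 1" using ni by (simp add: norm_eq_1)
        have "sigma_fun b w k (p + s *\<^sub>R w i) = s" using True k0 p(2) spos
          by (simp add: sigma_fun_def relu_def inner_add_right ww algebra_simps)
        moreover have "sigma_fun b w k (p + (-s) *\<^sub>R w i) = 0" using True k0 p(2) spos
          by (simp add: sigma_fun_def relu_def inner_add_right ww algebra_simps)
        moreover have "sigma_fun b w k p = 0" using True k0 p(2)
          by (simp add: sigma_fun_def relu_def)
        ultimately show ?thesis using True by simp
      next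
        case False
        then have kJ: "k \<in> J" using k k0 by (auto simp: J_def)
        have "\<bar>w k \<bullet> w i\<bar> \<le> 1"
          using Cauchy_Schwarz_ineq2[of "w k" "w i"] assms(5)[of k] ni kJ by (auto simp: J_def)
        then have "\<bar>s * (w k \<bullet> w i)\<bar> \<le> s" using spos
          by (simp add: abs_mult mult_left_le)
        then have lt: "\<bar>s * (w k \<bullet> w i)\<bar> < \<bar>w k \<bullet> p + b k\<bar>" using sj[OF kJ] by linarith
        have "relu (w k \<bullet> (p + s *\<^sub>R w i) + b k) + relu (w k \<bullet> (p + (-s) *\<^sub>R w i) + b k)
              = relu ((w k \<bullet> p + b k) + s * (w k \<bullet> w i)) + relu ((w k \<bullet> p + b k) - s * (w k \<bullet> w i))"
          by (simp add: inner_add_right algebra_simps)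
        also have "\<dots> = 2 * relu (w k \<bullet> p + b k)" by (rule relu_mid[OF lt])
        finally have "sigma_fun b w k (p + s *\<^sub>R w i) + sigma_fun b w k (p + (-s) *\<^sub>R w i)
            - 2 * sigma_fun b w k p = 0" using k0 by (simp add: sigma_fun_def)
        then have "c k * (sigma_fun b w k (p + s *\<^sub>R w i) + sigma_fun b w k (p + (-s) *\<^sub>R w i)
            - 2 * sigma_fun b w k p) = 0" by simp
        then show ?thesis using False by (simp add: algebra_simps)
      qed
    qed
    have "S (p + s *\<^sub>R w i) + S (p + (-s) *\<^sub>R w i) - 2 * S p
          = (\<Sum>k\<in>{0..n}. (if k = i then c i * s else 0))"
      unfolding S_def by (simp add: sum.distrib sum_subtractf sum_distrib_left D[symmetric])
    also have "\<dots> = c i * s" using i by simp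
    finally have "c i * s = 0"
      using S0 inO[of s] inO[of "-s"] p(1) spos unfolding S_def by simp
    then show ?thesis using spos by simp
  qed
  obtain x where x: "x \<in> \<Omega>" using assms(6)[of 1] assms(4) by auto
  have "S x = c 0"
  proof -
    have "S x = (\<Sum>k\<in>insert 0 {1..n}. c k * sigma_fun b w k x)"
      unfolding S_def by (rule sum.cong) auto
    also have "\<dots> = c 0" using ci by (simp add: sigma_fun_def)
    finally show ?thesis .
  qed
  then have c0: "c 0 = 0" using S0 x unfolding S_def by simp
  show "\<forall>i\<in>{0..n}. c i = 0"
  proof
    fix i assume "i \<in> {0..n}"
    then show "c i = 0" using ci c0 by (cases "i = 0") auto
  qed
qed

end
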